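(* Let $U$ be a VLA-J-SS. Let $U_1$ be the subspace spanned by all vectors $u_m(v_nw)-\varepsilon_{u,v}v_n(u_mw)-\sum_{i\ge0}\binom{m}{i}(u_iv)_{n+m-i}w$ with $u,v,w\in U$ homogeneous and $m,n\in\mathbb{N}$, and let $U_2$ be the subspace spanned by all vectors $$\sum_{i\ge0}(-1)^i\binom{k}{i}\big(u_{m+k-i}(v_{n+i}w)-\varepsilon_{u,v}(-1)^kv_{n+k-i}(u_{m+i}w)\big)-\sum_{i\ge0}\binom{m}{i}(u_{k+i}v)_{m+n-i}w$$ with $u,v,w\in U$ homogeneous and $k,m,n\in\mathbb{N}$. Then $U_1=U_2$.
   Context: All spaces over $\mathbb{C}$; $\mathbb{N}=\{0,1,2,\dots\}$; $\varepsilon_{u,v}=(-1)^{|u||v|}$. A VLA-J-SS is a $\mathbb{Z}_2$-graded space $U$ with an even linear operator $D$ and bilinear products $u_nv$ ($n\in\mathbb{N}$) such that for homogeneous $u,v$: $u_nv=0$ for $n$ large; $(Du)_nv=-nu_{n-1}v$ (read as $0$ for $n=0$); $D(u_nv)=(Du)_nv+u_n(Dv)$; $|u_nv|=|u|+|v|$. *)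

theory Defs
  imports Complex_Main
begin

text \<open>The underlying space is a type 'a with an
abstract complex scalar multiplication sc (a complex vector space via the HOL locale
vector_space). The Z2-grading is given by two subspaces Ev (even part) and Od (odd part)
with Ev \<inter> Od = {0} and Ev + Od = whole space. The products u_n v are pr n u v.\<close>

definition homog :: "'a set \<Rightarrow> 'a set \<Rightarrow> 'a \<Rightarrow> bool" where
  "homog Ev Od u \<longleftrightarrow> u \<in> Ev \<or> u \<in> Od"

text \<open>Sign epsilon_{u,v} = (-1)^{|u||v|}; it is -1 exactly when both are odd.\<close>
definition eps :: "'a set \<Rightarrow> 'a \<Rightarrow> 'a \<Rightarrow> complex" where
  "eps Od u v = (if u \<in> Od \<and> v \<in> Od then -1 else 1)"

locale VLA_J_SS = vector_space sc
  for sc :: "complex \<Rightarrow> 'a::ab_group_add \<Rightarrow> 'a"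
  + fixes Ev Od :: "'a set"
    and D :: "'a \<Rightarrow> 'a"
    and pr :: "nat \<Rightarrow> 'a \<Rightarrow> 'a \<Rightarrow> 'a"
  assumes sub_Ev: "subspace Ev"
    and sub_Od: "subspace Od"
    and Ev_Od_inter: "Ev \<inter> Od = {0}"
    and Ev_Od_sum: "\<forall>x. \<exists>a\<in>Ev. \<exists>b\<in>Od. x = a + b"
    and D_linear: "Vector_Spaces.linear sc sc D"
    and D_even: "\<forall>u\<in>Ev. D u \<in> Ev" "\<forall>u\<in>Od. D u \<in> Od"
    and pr_linear_left: "\<forall>n v. Vector_Spaces.linear sc sc (\<lambda>u. pr n u v)"
    and pr_linear_right: "\<forall>n u. Vector_Spaces.linear sc sc (pr n u)"
    and pr_locality: "\<forall>u v. homog Ev Od u \<longrightarrow> homog Ev Od v \<longrightarrow>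
                         (\<exists>N. \<forall>n\<ge>N. pr n u v = 0)"
    and pr_D_left: "\<forall>u v n. homog Ev Od u \<longrightarrow> homog Ev Od v \<longrightarrow>
           pr n (D u) v = (if n = 0 then 0 else - sc (of_nat n) (pr (n - 1) u v))"
    and pr_D_deriv: "\<forall>u v n. homog Ev Od u \<longrightarrow> homog Ev Od v \<longrightarrow>
           D (pr n u v) = pr n (D u) v + pr n u (D v)"
    and pr_parity: "\<forall>u v n.
           (u \<in> Ev \<longrightarrow> v \<in> Ev \<longrightarrow> pr n u v \<in> Ev) \<and>
           (u \<in> Ev \<longrightarrow> v \<in> Od \<longrightarrow> pr n u v \<in> Od) \<and>
           (u \<in> Od \<longrightarrow> v \<in> Ev \<longrightarrow> pr n u v \<in> Od) \<and>
           (u \<in> Od \<longrightarrow> v \<in> Od \<longrightarrow> pr n u v \<in> Ev)"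

definition gens1 :: "(complex \<Rightarrow> 'a \<Rightarrow> 'a) \<Rightarrow> 'a set \<Rightarrow> 'a set
    \<Rightarrow> (nat \<Rightarrow> 'a \<Rightarrow> 'a \<Rightarrow> 'a) \<Rightarrow> ('a::ab_group_add) set" where
  "gens1 sc Ev Od pr =
    {pr m u (pr n v w) - sc (eps Od u v) (pr n v (pr m u w))
       - (\<Sum>i = 0..m. sc (of_nat (m choose i)) (pr (n + m - i) (pr i u v) w))
     | u v w m n. homog Ev Od u \<and> homog Ev Od v \<and> homog Ev Od w}"

definition gens2 :: "(complex \<Rightarrow> 'a \<Rightarrow> 'a) \<Rightarrow> 'a set \<Rightarrow> 'a set
    \<Rightarrow> (nat \<Rightarrow> 'a \<Rightarrow> 'a \<Rightarrow> 'a) \<Rightarrow> ('a::ab_group_add) set" where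
  "gens2 sc Ev Od pr =
    {(\<Sum>i = 0..k. sc ((-1) ^ i * of_nat (k choose i))
         (pr (m + k - i) u (pr (n + i) v w)
          - sc (eps Od u v * (-1) ^ k) (pr (n + k - i) v (pr (m + i) u w))))
       - (\<Sum>i = 0..m. sc (of_nat (m choose i)) (pr (m + n - i) (pr (k + i) u v) w))
     | u v w k m n. homog Ev Od u \<and> homog Ev Od v \<and> homog Ev Od w}"

end

theory Submission imports Defs begin

context module begin

lemma S_rec:
  fixes f :: "nat \<Rightarrow> nat \<Rightarrow> 'b"
  shows "(\<Sum>i\<le>Suc k. ((-1)^i * of_nat (Suc k choose i)) *s f (m + Suc k - i) (n + i))
       = (\<Sum>i\<le>k. ((-1)^i * of_nat (k choose i)) *s f (Suc m + k - i) (n + i))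
       - (\<Sum>i\<le>k. ((-1)^i * of_nat (k choose i)) *s f (m + k - i) (Suc n + i))"
proof -
  have P: "(\<Sum>i\<le>k. ((-1)^i * of_nat (k choose i)) *s f (Suc m + k - i) (n + i))
     = f (m + Suc k) n + (\<Sum>i\<le>k. ((-1)^Suc i * of_nat (k choose Suc i)) *s f (m + k - i) (n + Suc i))"
  proof -
    have "(\<Sum>i\<le>k. ((-1)^i * of_nat (k choose i)) *s f (Suc m + k - i) (n + i))
       = (\<Sum>i\<le>Suc k. ((-1)^i * of_nat (k choose i)) *s f (Suc m + k - i) (n + i))"
      by (simp add: binomial_eq_0)
    also have "\<dots> = f (m + Suc k) n + (\<Sum>i\<le>k. ((-1)^Suc i * of_nat (k choose Suc i)) *s f (m + k - i) (n + Suc i))"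
      by (subst sum.atMost_Suc_shift) simp
    finally show ?thesis .
  qed
  have "(\<Sum>i\<le>Suc k. ((-1)^i * of_nat (Suc k choose i)) *s f (m + Suc k - i) (n + i))
      = f (m + Suc k) n + (\<Sum>i\<le>k. ((-1)^Suc i * of_nat (Suc k choose Suc i)) *s f (m + k - i) (n + Suc i))"
    by (subst sum.atMost_Suc_shift) simp
  also have "(\<Sum>i\<le>k. ((-1)^Suc i * of_nat (Suc k choose Suc i)) *s f (m + k - i) (n + Suc i))
      = (\<Sum>i\<le>k. ((-1)^Suc i * of_nat (k choose Suc i)) *s f (m + k - i) (n + Suc i))
       - (\<Sum>i\<le>k. ((-1)^i * of_nat (k choose i)) *s f (m + k - i) (Suc n + i))"
    unfolding sum_subtractf[symmetric]
  proof (rule sum.cong[OF refl])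
    fix i
    have "((-1)^Suc i * of_nat (Suc k choose Suc i) :: 'a)
       = (-1)^Suc i * of_nat (k choose Suc i) - (-1)^i * of_nat (k choose i)"
      by (simp add: algebra_simps)
    then show "((-1)^Suc i * of_nat (Suc k choose Suc i)) *s f (m + k - i) (n + Suc i)
      = ((-1)^Suc i * of_nat (k choose Suc i)) *s f (m + k - i) (n + Suc i)
       - ((-1)^i * of_nat (k choose i)) *s f (m + k - i) (Suc n + i)"
      by (simp add: scale_left_diff_distrib)
  qed
  finally show ?thesis using P by (simp add: algebra_simps)
qed

lemma C_rec:
  fixes h :: "nat \<Rightarrow> nat \<Rightarrow> 'b"
  shows "(\<Sum>i\<le>Suc m. of_nat (Suc m choose i) *s h (k + i) (Suc m + n - i))
     = (\<Sum>i\<le>m. of_nat (m choose i) *s h (k + i) (m + Suc n - i))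
     + (\<Sum>i\<le>m. of_nat (m choose i) *s h (Suc k + i) (m + n - i))"
proof -
  have P: "(\<Sum>i\<le>m. of_nat (m choose i) *s h (k + i) (m + Suc n - i))
     = h k (Suc m + n) + (\<Sum>i\<le>m. of_nat (m choose Suc i) *s h (k + Suc i) (m + n - i))"
  proof -
    have "(\<Sum>i\<le>m. of_nat (m choose i) *s h (k + i) (m + Suc n - i))
       = (\<Sum>i\<le>Suc m. of_nat (m choose i) *s h (k + i) (m + Suc n - i))"
      by (simp add: binomial_eq_0)
    also have "\<dots> = h k (Suc m + n) + (\<Sum>i\<le>m. of_nat (m choose Suc i) *s h (k + Suc i) (m + n - i))"
      by (subst sum.atMost_Suc_shift) simp
    finally show ?thesis .
  qed
  have "(\<Sum>i\<le>Suc m. of_nat (Suc m choose i) *s h (k + i) (Suc m + n - i))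
      = h k (Suc m + n) + (\<Sum>i\<le>m. of_nat (Suc m choose Suc i) *s h (k + Suc i) (m + n - i))"
    by (subst sum.atMost_Suc_shift) simp
  also have "(\<Sum>i\<le>m. of_nat (Suc m choose Suc i) *s h (k + Suc i) (m + n - i))
      = (\<Sum>i\<le>m. of_nat (m choose Suc i) *s h (k + Suc i) (m + n - i))
      + (\<Sum>i\<le>m. of_nat (m choose i) *s h (Suc k + i) (m + n - i))"
    by (simp add: sum.distrib[symmetric] algebra_simps)
  finally show ?thesis using P by (simp add: algebra_simps)
qed

end

lemma main_gen:
  fixes sc :: "complex \<Rightarrow> 'a::ab_group_add \<Rightarrow> 'a"
  assumes "module sc"
  shows "module.span sc (gens1 sc Ev Od pr) = module.span sc (gens2 sc Ev Od pr)"
proof -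
  interpret module sc by (rule assms)
  have K: "(\<Sum>i = 0..k. sc ((-1) ^ i * of_nat (k choose i))
         (pr (m + k - i) u (pr (n + i) v w)
          - sc (eps Od u v * (-1) ^ k) (pr (n + k - i) v (pr (m + i) u w))))
       - (\<Sum>i = 0..m. sc (of_nat (m choose i)) (pr (m + n - i) (pr (k + i) u v) w))
     \<in> span (gens1 sc Ev Od pr)"
    if h: "homog Ev Od u" "homog Ev Od v" "homog Ev Od w" for u v w k m n
  proof -
    define e where "e = eps Od u v"
    define A where "A k m n = (\<Sum>i\<le>k. sc ((-1)^i * of_nat (k choose i)) (pr (m+k-i) u (pr (n+i) v w)))" for k m n
    define B where "B k m n = (\<Sum>i\<le>k. sc ((-1)^i * of_nat (k choose i)) (pr (n+k-i) v (pr (m+i) u w)))" for k m n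
    define C where "C k m n = (\<Sum>i\<le>m. sc (of_nat (m choose i)) (pr (m+n-i) (pr (k+i) u v) w))" for k m n
    define K where "K k m n = A k m n - sc (e * (-1)^k) (B k m n) - C k m n" for k m n
    have KK: "(\<Sum>i = 0..k. sc ((-1) ^ i * of_nat (k choose i))
         (pr (m + k - i) u (pr (n + i) v w)
          - sc (eps Od u v * (-1) ^ k) (pr (n + k - i) v (pr (m + i) u w))))
       - (\<Sum>i = 0..m. sc (of_nat (m choose i)) (pr (m + n - i) (pr (k + i) u v) w)) = K k m n" for k m n
      unfolding K_def A_def B_def C_def e_def atLeast0AtMost
      by (simp add: scale_right_diff_distrib sum_subtractf scale_sum_right mult.commute mult.left_commute)
    have Arec: "A (Suc k) m n = A k (Suc m) n - A k m (Suc n)" for k m n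
      unfolding A_def using S_rec[where f="\<lambda>a b. pr a u (pr b v w)" and k=k and m=m and n=n] by simp
    have Brec: "B (Suc k) m n = B k m (Suc n) - B k (Suc m) n" for k m n
      unfolding B_def using S_rec[where f="\<lambda>a b. pr a v (pr b u w)" and k=k and m=n and n=m] by simp
    have Crec: "C (Suc k) m n = C k (Suc m) n - C k m (Suc n)" for k m n
      unfolding C_def using C_rec[where h="\<lambda>a b. pr b (pr a u v) w" and m=m and k=k and n=n] by (simp add: algebra_simps)
    have Krec: "K (Suc k) m n = K k (Suc m) n - K k m (Suc n)" for k m n
      unfolding K_def Arec Brec Crec by (simp add: algebra_simps)
    have base: "K 0 m n \<in> gens1 sc Ev Od pr" for m n
    proof -
      have "K 0 m n = pr m u (pr n v w) - sc (eps Od u v) (pr n v (pr m u w))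
       - (\<Sum>i = 0..m. sc (of_nat (m choose i)) (pr (n + m - i) (pr i u v) w))"
        unfolding K_def A_def B_def C_def e_def atLeast0AtMost by (simp add: add.commute)
      then show ?thesis unfolding gens1_def using h by blast
    qed
    have "\<forall>m n. K k m n \<in> span (gens1 sc Ev Od pr)" for k
    proof (induction k)
      case 0
      then show ?case using base span_base by blast
    next
      case (Suc k)
      then show ?case using Krec span_diff by simp
    qed
    then show ?thesis using KK[of k m n] by simp
  qed
  have g12: "gens1 sc Ev Od pr \<subseteq> gens2 sc Ev Od pr"
  proof
    fix x assume "x \<in> gens1 sc Ev Od pr"
    then obtain u v w m n where h: "homog Ev Od u" "homog Ev Od v" "homog Ev Od w"
      and x: "x = pr m u (pr n v w) - sc (eps Od u v) (pr n v (pr m u w))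
       - (\<Sum>i = 0..m. sc (of_nat (m choose i)) (pr (n + m - i) (pr i u v) w))"
      unfolding gens1_def by blast
    have "x = (\<Sum>i = 0..0. sc ((-1) ^ i * of_nat (0 choose i))
         (pr (m + 0 - i) u (pr (n + i) v w)
          - sc (eps Od u v * (-1) ^ 0) (pr (n + 0 - i) v (pr (m + i) u w))))
       - (\<Sum>i = 0..m. sc (of_nat (m choose i)) (pr (m + n - i) (pr (0 + i) u v) w))"
      unfolding x by (simp add: add.commute)
    then show "x \<in> gens2 sc Ev Od pr" unfolding gens2_def using h by blast
  qed
  have g21: "gens2 sc Ev Od pr \<subseteq> span (gens1 sc Ev Od pr)"
    unfolding gens2_def using K by blast
  show ?thesis unfolding span_eq using g21 g12 span_superset by blast
qed

theorem lemma6p4: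
  fixes sc :: "complex \<Rightarrow> 'a::ab_group_add \<Rightarrow> 'a"
  assumes "VLA_J_SS sc Ev Od D pr"
  shows "module.span sc (gens1 sc Ev Od pr) = module.span sc (gens2 sc Ev Od pr)"
proof -
  have "module sc" using assms unfolding VLA_J_SS_def vector_space_def module_def by blast
  then show ?thesis by (rule main_gen)
qed

end
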